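(* Let $G=(V,E)$ be a finite, undirected, connected graph with unit edge weights and vertex set $V=\{v_1,\dots,v_N\}$, let $L=D-A$ be its graph Laplacian, and let $\phi_{\lambda_1},\dots,\phi_{\lambda_N}$ be an orthonormal basis of $\mathbb{C}^N$ of eigenvectors of $L$ (with eigenvalues $\lambda_1,\dots,\lambda_N$). For $t\ge 0$ let $H_t=e^{-tL}$, and define the graph short-time Fourier transform $V_t:\mathbb{C}^N\to\mathbb{C}^{N\times N}$ by $$(V_tf)(v_i,\lambda_j)=\sum_{k=1}^N f(v_k)\,H_t(v_i,v_k)\,\overline{\phi_{\lambda_j}(v_k)}.$$ Define $W_t:\mathbb{C}^{N\times N}\to\mathbb{C}^N$ by $$(W_tF)(v_i)=\frac{1}{\|H_t(\cdot,v_i)\|^2}\sum_{j=1}^N\phi_{\lambda_j}(v_i)\Big[\sum_{k=1}^N F(v_k,\lambda_j)\,H_t(v_k,v_i)\Big].$$ Then $W_t$ is a left inverse of $V_t$, i.e. $W_tV_tf=f$ for all $f\in\mathbb{C}^N$.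
   Context: The graph Laplacian acts by $Lf(v)=\sum_{u\sim v}(f(v)-f(u))$; in matrix form $L=D-A$ with $A$ the adjacency matrix and $D$ the diagonal degree matrix. Vectors in $\mathbb{C}^N$ are functions on $V$; $\phi_{\lambda_j}(v_k)$ is the $v_k$-entry of $\phi_{\lambda_j}$; $H_t(v_i,v_k)$ is the $(i,k)$ entry of $H_t$ and $H_t(\cdot,v_i)$ its $i$-th column. Elements $F\in\mathbb{C}^{N\times N}$ are indexed as $F(v_k,\lambda_j)$, $k,j\in\{1,\dots,N\}$. *)

theory Defs
  imports "HOL-Analysis.Analysis"
begin

text \<open>Vertices are the elements of a finite type 'n (so N = CARD('n)); the eigenvalue
  index j also ranges over 'n. Matrices are complex^'n^'n with M $ i $ k the (i,k) entry.\<close>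

definition simple_graph :: "('n::finite \<Rightarrow> 'n \<Rightarrow> bool) \<Rightarrow> bool" where
  "simple_graph E \<longleftrightarrow> (\<forall>u v. E u v \<longrightarrow> E v u) \<and> (\<forall>u. \<not> E u u)"

definition connected_graph :: "('n::finite \<Rightarrow> 'n \<Rightarrow> bool) \<Rightarrow> bool" where
  "connected_graph E \<longleftrightarrow> (\<forall>u v. E\<^sup>*\<^sup>* u v)"

definition adj_matrix :: "('n::finite \<Rightarrow> 'n \<Rightarrow> bool) \<Rightarrow> complex^'n^'n" where
  "adj_matrix E = (\<chi> i k. if E i k then 1 else 0)"

definition deg_matrix :: "('n::finite \<Rightarrow> 'n \<Rightarrow> bool) \<Rightarrow> complex^'n^'n" where
  "deg_matrix E = (\<chi> i k. if i = k then of_nat (card {u. E i u}) else 0)"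

definition laplacian :: "('n::finite \<Rightarrow> 'n \<Rightarrow> bool) \<Rightarrow> complex^'n^'n" where
  "laplacian E = deg_matrix E - adj_matrix E"

fun mat_pow :: "complex^'n^'n \<Rightarrow> nat \<Rightarrow> complex^'n^'n" where
  "mat_pow M 0 = mat 1"
| "mat_pow M (Suc m) = M ** mat_pow M m"

definition mat_exp :: "complex^'n^'n \<Rightarrow> complex^'n^'n" where
  "mat_exp M = (\<Sum>m. (1 / fact m) *\<^sub>R mat_pow M m)"

definition heat_kernel :: "('n::finite \<Rightarrow> 'n \<Rightarrow> bool) \<Rightarrow> real \<Rightarrow> complex^'n^'n" where
  "heat_kernel E t = mat_exp ((- t) *\<^sub>R laplacian E)"

text \<open>Graph short-time Fourier transform; phi j is the j-th eigenvector, F $ k $ j = F(v_k, lambda_j).\<close>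
definition gSTFT :: "('n::finite \<Rightarrow> 'n \<Rightarrow> bool) \<Rightarrow> ('n \<Rightarrow> complex^'n) \<Rightarrow> real
    \<Rightarrow> complex^'n \<Rightarrow> complex^'n^'n" where
  "gSTFT E phi t f = (let H = heat_kernel E t in
     (\<chi> i j. \<Sum>k\<in>UNIV. f $ k * H $ i $ k * cnj (phi j $ k)))"

definition gW :: "('n::finite \<Rightarrow> 'n \<Rightarrow> bool) \<Rightarrow> ('n \<Rightarrow> complex^'n) \<Rightarrow> real
    \<Rightarrow> complex^'n^'n \<Rightarrow> complex^'n" where
  "gW E phi t F = (let H = heat_kernel E t in
     (\<chi> i. (1 / complex_of_real ((\<Sum>k\<in>UNIV. (cmod (H $ k $ i))\<^sup>2))) *
        (\<Sum>j\<in>UNIV. phi j $ i * (\<Sum>k\<in>UNIV. F $ k $ j * H $ k $ i))))"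

end

theory Submission
  imports Defs
begin

lemma norm_mat_le_entries:
  fixes A :: "complex^'n::finite^'n"
  shows "norm A \<le> (\<Sum>i\<in>UNIV. \<Sum>k\<in>UNIV. norm (A$i$k))"
proof -
  have "norm A \<le> (\<Sum>i\<in>UNIV. norm (A$i))"
    unfolding norm_vec_def by (rule L2_set_le_sum) auto
  also have "\<dots> \<le> (\<Sum>i\<in>UNIV. \<Sum>k\<in>UNIV. norm (A$i$k))"
    by (rule sum_mono) (unfold norm_vec_def, rule L2_set_le_sum, auto)
  finally show ?thesis .
qed

lemma mat_pow_entry_bound:
  fixes M :: "complex^'n::finite^'n"
  shows "norm (mat_pow M m $ i $ k) \<le> (\<Sum>i\<in>UNIV. \<Sum>l\<in>UNIV. norm (M$i$l)) ^ m"
proof (induction m arbitrary: i k)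
  case 0
  then show ?case by (simp add: mat_def)
next
  case (Suc m)
  define s where "s = (\<Sum>i\<in>UNIV. \<Sum>l\<in>UNIV. norm (M$i$l))"
  have row: "(\<Sum>l\<in>UNIV. norm (M$i$l)) \<le> s"
    unfolding s_def by (rule member_le_sum[where f="\<lambda>i. \<Sum>l\<in>UNIV. norm (M$i$l)"]) (auto intro: sum_nonneg)
  have "norm (mat_pow M (Suc m) $ i $ k) = norm (\<Sum>l\<in>UNIV. M$i$l * mat_pow M m $ l $ k)"
    by (simp add: matrix_matrix_mult_def)
  also have "\<dots> \<le> (\<Sum>l\<in>UNIV. norm (M$i$l) * s^m)"
    by (rule order_trans[OF norm_sum sum_mono]) (auto simp: norm_mult s_def intro: mult_left_mono Suc.IH)
  also have "\<dots> = (\<Sum>l\<in>UNIV. norm (M$i$l)) * s^m" by (simp add: sum_distrib_right)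
  also have "\<dots> \<le> s * s^m" using row by (rule mult_right_mono) (simp add: s_def sum_nonneg)
  finally show ?case by (simp add: s_def)
qed

lemma mat_exp_summable:
  fixes M :: "complex^'n::finite^'n"
  shows "summable (\<lambda>m. (1 / fact m) *\<^sub>R mat_pow M m)"
proof -
  define s where "s = (\<Sum>i\<in>UNIV. \<Sum>l\<in>UNIV. norm (M$i$l))"
  define N where "N = real (CARD('n)) * real (CARD('n))"
  have b: "norm ((1 / fact m) *\<^sub>R mat_pow M m) \<le> N * (s ^ m /\<^sub>R fact m)" for m
  proof -
    have "norm (mat_pow M m) \<le> (\<Sum>i\<in>(UNIV::'n set). \<Sum>k\<in>(UNIV::'n set). s^m)"
      by (rule order_trans[OF norm_mat_le_entries]) (intro sum_mono, unfold s_def, rule mat_pow_entry_bound)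
    also have "\<dots> = N * s^m" by (simp add: N_def)
    finally show ?thesis by (simp add: field_simps)
  qed
  show ?thesis
    by (rule summable_comparison_test[OF _ summable_mult[OF summable_exp_generic]]) (use b in auto)
qed

lemma mat_exp_entry_sums:
  fixes M :: "complex^'n::finite^'n"
  shows "(\<lambda>m. (1 / fact m) *\<^sub>R (mat_pow M m $ i $ k)) sums (mat_exp M $ i $ k)"
proof -
  have "(\<lambda>m. (1 / fact m) *\<^sub>R mat_pow M m) sums mat_exp M"
    unfolding mat_exp_def using summable_sums[OF mat_exp_summable] .
  then have "(\<lambda>m. ((1 / fact m) *\<^sub>R mat_pow M m) $ i) sums (mat_exp M $ i)"
    by (rule bounded_linear.sums[OF bounded_linear_vec_nth])
  then have "(\<lambda>m. ((1 / fact m) *\<^sub>R mat_pow M m) $ i $ k) sums (mat_exp M $ i $ k)"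
    by (rule bounded_linear.sums[OF bounded_linear_vec_nth])
  then show ?thesis by simp
qed

lemma mat_pow_real:
  fixes M :: "complex^'n::finite^'n"
  assumes "\<And>i k. Im (M$i$k) = 0"
  shows "Im (mat_pow M m $ i $ k) = 0"
  using assms
  by (induction m arbitrary: i k) (auto simp: mat_def matrix_matrix_mult_def Im_sum intro!: sum.neutral)

lemma mat_exp_real:
  fixes M :: "complex^'n::finite^'n"
  assumes "\<And>i k. Im (M$i$k) = 0"
  shows "Im (mat_exp M $ i $ k) = 0"
proof -
  have "(\<lambda>m. Im ((1 / fact m) *\<^sub>R (mat_pow M m $ i $ k))) sums Im (mat_exp M $ i $ k)"
    by (rule bounded_linear.sums[OF bounded_linear_Im mat_exp_entry_sums])
  moreover have "(\<lambda>m. Im ((1 / fact m) *\<^sub>R (mat_pow M m $ i $ k))) = (\<lambda>m. 0)"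
    using mat_pow_real[OF assms] by simp
  ultimately show ?thesis using sums_unique2 sums_zero by metis
qed

lemma mat_pow_eigen:
  fixes M :: "complex^'n::finite^'n"
  assumes "M *v v = \<mu> *s v"
  shows "mat_pow M m *v v = \<mu>^m *s v"
proof (induction m)
  case 0
  then show ?case by simp
next
  case (Suc m)
  have "mat_pow M (Suc m) *v v = M *v (\<mu>^m *s v)"
    by (simp add: matrix_vector_mul_assoc[symmetric] Suc)
  also have "\<dots> = \<mu>^m *s (M *v v)"
    by (simp add: vec_eq_iff matrix_vector_mult_def sum_distrib_left algebra_simps)
  also have "\<dots> = \<mu>^Suc m *s v" using assms by (simp add: vec_eq_iff algebra_simps)
  finally show ?case .
qed

lemma mat_exp_eigen:
  fixes M :: "complex^'n::finite^'n"
  assumes "M *v v = \<mu> *s v"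
  shows "mat_exp M *v v = exp \<mu> *s v"
proof (rule vec_eq_iff[THEN iffD2, rule_format])
  fix i
  have "(\<lambda>m. \<Sum>k\<in>UNIV. (1 / fact m) *\<^sub>R (mat_pow M m $ i $ k) * v $ k) sums
          (\<Sum>k\<in>UNIV. mat_exp M $ i $ k * v $ k)"
    by (rule sums_sum) (intro sums_mult2 mat_exp_entry_sums)
  moreover have "(\<Sum>k\<in>UNIV. (1 / fact m) *\<^sub>R (mat_pow M m $ i $ k) * v $ k)
      = (\<mu>^m /\<^sub>R fact m) * v $ i" for m
  proof -
    have "(\<Sum>k\<in>UNIV. (1 / fact m) *\<^sub>R (mat_pow M m $ i $ k) * v $ k)
        = (1 / fact m) *\<^sub>R (mat_pow M m *v v) $ i"
      by (simp add: matrix_vector_mult_def scaleR_sum_right)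
    also have "\<dots> = (\<mu>^m /\<^sub>R fact m) * v $ i"
      by (simp add: mat_pow_eigen[OF assms] divide_inverse_commute)
    finally show ?thesis .
  qed
  ultimately have "(\<lambda>m. (\<mu>^m /\<^sub>R fact m) * v $ i) sums (mat_exp M *v v) $ i"
    by (simp add: matrix_vector_mult_def)
  moreover have "(\<lambda>m. (\<mu>^m /\<^sub>R fact m) * v $ i) sums (exp \<mu> * v $ i)"
    by (rule sums_mult2[OF exp_converges])
  ultimately show "(mat_exp M *v v) $ i = (exp \<mu> *s v) $ i"
    using sums_unique2 by simp
qed

theorem theorem3p3:
  fixes E :: "'n::finite \<Rightarrow> 'n \<Rightarrow> bool"
    and phi :: "'n \<Rightarrow> complex^'n"
    and lam :: "'n \<Rightarrow> complex"
    and t :: real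
  assumes "simple_graph E"
    and "connected_graph E"
    and "\<And>j. laplacian E *v phi j = lam j *s phi j"
    and "\<And>j j'. (\<Sum>k\<in>UNIV. phi j $ k * cnj (phi j' $ k)) = (if j = j' then 1 else 0)"
    and "t \<ge> 0"
  shows "\<forall>f. gW E phi t (gSTFT E phi t f) = f"
proof
  fix f :: "complex^'n"
  define M where "M = (- t) *\<^sub>R laplacian E"
  define H where "H = heat_kernel E t"
  have H_def': "H = mat_exp M" by (simp add: H_def M_def heat_kernel_def)
  have Mreal: "Im (M$i$k) = 0" for i k
    by (simp add: M_def laplacian_def deg_matrix_def adj_matrix_def)
  have Hreal: "Im (H$i$k) = 0" for i k
    unfolding H_def' by (rule mat_exp_real[OF Mreal])
  have HH: "H$k$i * H$k$i = complex_of_real ((cmod (H$k$i))\<^sup>2)" for k i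
    using Hreal[of k i] by (simp add: cmod_def complex_eq_iff power2_eq_square)
  define e where "e j = exp (complex_of_real (- t) * lam j)" for j
  have Heig: "H *v phi j = e j *s phi j" for j
  proof -
    have "M *v phi j = (complex_of_real (- t) * lam j) *s phi j"
    proof -
      have "M *v phi j = complex_of_real (-t) *s (laplacian E *v phi j)"
        by (simp add: M_def vec_eq_iff matrix_vector_mult_def sum_distrib_left mult.assoc scaleR_sum_right) (simp add: scaleR_conv_of_real sum_negf)
      then show ?thesis by (simp add: assms(3) vec_eq_iff)
    qed
    then show ?thesis unfolding H_def' e_def by (rule mat_exp_eigen)
  qed
  have U: "(\<Sum>j\<in>UNIV. phi j $ i * cnj (phi j $ m)) = (if i = m then 1 else 0)" for i m
  proof -
    define P :: "complex^'n^'n" where "P = (\<chi> j k. phi j $ k)"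
    define Q :: "complex^'n^'n" where "Q = (\<chi> k j. cnj (phi j $ k))"
    have "P ** Q = mat 1"
      using assms(4) by (simp add: P_def Q_def vec_eq_iff matrix_matrix_mult_def mat_def)
    then have "Q ** P = mat 1" using matrix_left_right_inverse by blast
    then have "(Q ** P) $ m $ i = mat 1 $ m $ i" by simp
    then show ?thesis
      by (simp add: P_def Q_def matrix_matrix_mult_def mat_def mult.commute)
  qed
  have Hdec: "H$k$i = (\<Sum>j\<in>UNIV. e j * phi j $ k * cnj (phi j $ i))" for k i
  proof -
    have "H$k$i = (\<Sum>l\<in>UNIV. H$k$l * (\<Sum>j\<in>UNIV. phi j $ l * cnj (phi j $ i)))"
      by (simp add: U if_distrib cong: if_cong)
    also have "\<dots> = (\<Sum>l\<in>UNIV. \<Sum>j\<in>UNIV. H$k$l * (phi j $ l * cnj (phi j $ i)))"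
      by (simp add: sum_distrib_left)
    also have "\<dots> = (\<Sum>j\<in>UNIV. \<Sum>l\<in>UNIV. H$k$l * (phi j $ l * cnj (phi j $ i)))"
      by (rule sum.swap)
    also have "\<dots> = (\<Sum>j\<in>UNIV. cnj (phi j $ i) * (H *v phi j) $ k)"
      by (simp add: matrix_vector_mult_def sum_distrib_left mult_ac)
    also have "\<dots> = (\<Sum>j\<in>UNIV. e j * phi j $ k * cnj (phi j $ i))"
      by (simp add: Heig algebra_simps)
    finally show ?thesis .
  qed
  have cnz: "(\<Sum>k\<in>UNIV. (cmod (H $ k $ i))\<^sup>2) \<noteq> 0" for i
  proof
    assume "(\<Sum>k\<in>UNIV. (cmod (H $ k $ i))\<^sup>2) = 0"
    then have z: "H $ k $ i = 0" for k
      by (subst (asm) sum_nonneg_eq_0_iff) auto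
    have "phi j' $ i = 0" for j'
    proof -
      have "0 = (\<Sum>k\<in>UNIV. H$k$i * cnj (phi j' $ k))" by (simp add: z)
      also have "\<dots> = (\<Sum>k\<in>UNIV. \<Sum>j\<in>UNIV. e j * phi j $ k * cnj (phi j $ i) * cnj (phi j' $ k))"
        by (simp add: Hdec sum_distrib_right)
      also have "\<dots> = (\<Sum>j\<in>UNIV. \<Sum>k\<in>UNIV. e j * phi j $ k * cnj (phi j $ i) * cnj (phi j' $ k))"
        by (rule sum.swap)
      also have "\<dots> = (\<Sum>j\<in>UNIV. e j * cnj (phi j $ i) * (\<Sum>k\<in>UNIV. phi j $ k * cnj (phi j' $ k)))"
        by (simp add: sum_distrib_left mult_ac)
      also have "\<dots> = e j' * cnj (phi j' $ i)"
        by (simp add: assms(4) if_distrib cong: if_cong)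
      finally show ?thesis by (simp add: e_def)
    qed
    then show False using U[of i i] by simp
  qed
  show "gW E phi t (gSTFT E phi t f) = f"
  proof (rule vec_eq_iff[THEN iffD2, rule_format])
    fix i
    define c where "c = (\<Sum>k\<in>UNIV. (cmod (H $ k $ i))\<^sup>2)"
    have "(\<Sum>j\<in>UNIV. phi j $ i * (\<Sum>k\<in>UNIV. (\<Sum>m\<in>UNIV. f $ m * H $ k $ m * cnj (phi j $ m)) * H $ k $ i))
       = (\<Sum>k\<in>UNIV. \<Sum>m\<in>UNIV. f $ m * H $ k $ m * H $ k $ i * (\<Sum>j\<in>UNIV. phi j $ i * cnj (phi j $ m)))"
    proof -
      have "(\<Sum>j\<in>UNIV. phi j $ i * (\<Sum>k\<in>UNIV. (\<Sum>m\<in>UNIV. f $ m * H $ k $ m * cnj (phi j $ m)) * H $ k $ i))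
        = (\<Sum>j\<in>UNIV. \<Sum>k\<in>UNIV. \<Sum>m\<in>UNIV. phi j $ i * (f $ m * H $ k $ m * cnj (phi j $ m)) * H $ k $ i)"
        by (simp add: sum_distrib_left sum_distrib_right mult.assoc)
      also have "\<dots> = (\<Sum>k\<in>UNIV. \<Sum>j\<in>UNIV. \<Sum>m\<in>UNIV. phi j $ i * (f $ m * H $ k $ m * cnj (phi j $ m)) * H $ k $ i)"
        by (rule sum.swap)
      also have "\<dots> = (\<Sum>k\<in>UNIV. \<Sum>m\<in>UNIV. \<Sum>j\<in>UNIV. phi j $ i * (f $ m * H $ k $ m * cnj (phi j $ m)) * H $ k $ i)"
        by (rule sum.cong[OF refl], rule sum.swap)
      also have "\<dots> = (\<Sum>k\<in>UNIV. \<Sum>m\<in>UNIV. f $ m * H $ k $ m * H $ k $ i * (\<Sum>j\<in>UNIV. phi j $ i * cnj (phi j $ m)))"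
        by (simp add: sum_distrib_left mult_ac)
      finally show ?thesis .
    qed
    also have "\<dots> = (\<Sum>k\<in>UNIV. f $ i * (H $ k $ i * H $ k $ i))"
      by (simp add: U if_distrib mult.assoc cong: if_cong)
    also have "\<dots> = f $ i * complex_of_real c"
      by (simp add: HH c_def sum_distrib_left)
    finally have eq: "(\<Sum>j\<in>UNIV. phi j $ i * (\<Sum>k\<in>UNIV. (\<Sum>m\<in>UNIV. f $ m * H $ k $ m * cnj (phi j $ m)) * H $ k $ i))
        = f $ i * complex_of_real c" .
    have "c \<noteq> 0" using cnz unfolding c_def .
    then show "gW E phi t (gSTFT E phi t f) $ i = f $ i"
      unfolding gW_def gSTFT_def Let_def H_def[symmetric] vec_lambda_beta c_def[symmetric] eq
      by simp
  qed
qed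

end
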